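(* Let $\mathbf{L}=\mathbf{b}+\mathbb{N}(\mathbf{F})\subseteq\mathbb{N}^n$ be a linear set ($\mathbf{F}$ finite) and $\mathbf{X}\subseteq\mathbf{L}$. Then the following are equivalent: (a) for every $\mathbf{x}\in\mathbf{L}$ and every $\mathbf{w}\in\mathbb{N}_{\ge1}(\mathbf{F})$ there is $N\in\mathbb{N}$ with $\mathbf{x}+\mathbb{N}_{\ge N}\mathbf{w}\subseteq\mathbf{X}$; (b) for every $\mathbf{x}\in\mathbf{L}$ and every $\mathbf{w}\in\mathrm{int}(\mathbf{L})-\mathbf{b}=\mathrm{int}(\mathbb{N}(\mathbf{F}))$ there is $N\in\mathbb{N}$ with $\mathbf{x}+\mathbb{N}_{\ge N}\mathbf{w}\subseteq\mathbf{X}$. In particular, whether $\mathbf{X}\trianglelefteq\mathbf{L}$ holds does not depend on the chosen representation of $\mathbf{L}$.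
   Context: $\mathbb{N}_{\ge1}(\mathbf{F})=\{\sum_{\mathbf{f}\in\mathbf{F}}\lambda_{\mathbf{f}}\mathbf{f}\mid\lambda_{\mathbf{f}}\in\mathbb{N},\lambda_{\mathbf{f}}\ge1\}$. For an $\mathbb{N}$-generated set $\mathbf{P}$ (closed under addition, containing $\mathbf{0}$), a vector $\mathbf{v}\in\mathbf{P}$ is interior if for every $\mathbf{x}\in\mathbf{P}$ there is $m\in\mathbb{N}$ with $m\mathbf{v}-\mathbf{x}\in\mathbf{P}$; $\mathrm{int}(\mathbf{P})$ is the set of interior vectors. For a linear set $\mathbf{L}=\mathbf{b}+\mathbb{N}(\mathbf{F})\subseteq\mathbb{N}^n$ ($\mathbf{b}$ is its unique minimal element), $\mathrm{int}(\mathbf{L})=\mathbf{b}+\mathrm{int}(\mathbf{L}-\mathbf{b})$. $\mathbf{X}\trianglelefteq\mathbf{L}$ is defined by condition (a). *)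

theory Defs
  imports Main
begin

text \<open>Vectors of \<open>\<nat>\<^sup>n\<close> are functions \<open>'n \<Rightarrow> nat\<close> with a finite index type \<open>'n\<close>
  (so n = CARD('n)); addition and scaling are pointwise.\<close>

definition vadd :: "('n \<Rightarrow> nat) \<Rightarrow> ('n \<Rightarrow> nat) \<Rightarrow> ('n \<Rightarrow> nat)" where
  "vadd x y = (\<lambda>i. x i + y i)"

definition vsmul :: "nat \<Rightarrow> ('n \<Rightarrow> nat) \<Rightarrow> ('n \<Rightarrow> nat)" where
  "vsmul m x = (\<lambda>i. m * x i)"

definition Ncomb :: "('n \<Rightarrow> nat) set \<Rightarrow> ('n \<Rightarrow> nat) set" where
  "Ncomb F = {v. \<exists>lam :: ('n \<Rightarrow> nat) \<Rightarrow> nat. v = (\<lambda>i. \<Sum>f\<in>F. lam f * f i)}"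

definition Ncomb_ge1 :: "('n \<Rightarrow> nat) set \<Rightarrow> ('n \<Rightarrow> nat) set" where
  "Ncomb_ge1 F = {v. \<exists>lam :: ('n \<Rightarrow> nat) \<Rightarrow> nat. (\<forall>f\<in>F. lam f \<ge> 1) \<and> v = (\<lambda>i. \<Sum>f\<in>F. lam f * f i)}"

definition linset :: "('n \<Rightarrow> nat) \<Rightarrow> ('n \<Rightarrow> nat) set \<Rightarrow> ('n \<Rightarrow> nat) set" where
  "linset b F = {vadd b v | v. v \<in> Ncomb F}"

text \<open>Interior vectors of an \<open>\<nat>\<close>-generated set P: \<open>v \<in> P\<close> such that for every \<open>x \<in> P\<close>
  there is m with \<open>m v - x \<in> P\<close>, i.e. \<open>m v = x + p\<close> for some \<open>p \<in> P\<close>.\<close>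
definition intr :: "('n \<Rightarrow> nat) set \<Rightarrow> ('n \<Rightarrow> nat) set" where
  "intr P = {v \<in> P. \<forall>x\<in>P. \<exists>m::nat. \<exists>p\<in>P. vsmul m v = vadd x p}"

definition trileq :: "('n \<Rightarrow> nat) set \<Rightarrow> ('n \<Rightarrow> nat) \<Rightarrow> ('n \<Rightarrow> nat) set \<Rightarrow> bool" where
  "trileq X b F \<longleftrightarrow> (\<forall>x\<in>linset b F. \<forall>w\<in>Ncomb_ge1 F.
      \<exists>N::nat. \<forall>k\<ge>N. vadd x (vsmul k w) \<in> X)"

end

theory Submission
  imports Defs
begin

lemma Ncomb_I: "v = (\<lambda>i. \<Sum>f\<in>F. lam f * f i) \<Longrightarrow> v \<in> Ncomb F"
  unfolding Ncomb_def by blast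

lemma Ncomb_E: "v \<in> Ncomb F \<Longrightarrow> (\<And>lam. v = (\<lambda>i. \<Sum>f\<in>F. lam f * f i) \<Longrightarrow> P) \<Longrightarrow> P"
  unfolding Ncomb_def by blast

lemma Ncomb_zero: "(\<lambda>i. 0) \<in> Ncomb F"
  unfolding Ncomb_def by (rule CollectI, rule exI[of _ "\<lambda>_. 0"]) simp

lemma Ncomb_add: "u \<in> Ncomb F \<Longrightarrow> v \<in> Ncomb F \<Longrightarrow> vadd u v \<in> Ncomb F"
proof -
  assume "u \<in> Ncomb F" "v \<in> Ncomb F"
  then obtain a c where a: "u = (\<lambda>i. \<Sum>f\<in>F. a f * f i)" and c: "v = (\<lambda>i. \<Sum>f\<in>F. c f * f i)"
    unfolding Ncomb_def by blast
  have "vadd u v = (\<lambda>i. \<Sum>f\<in>F. (a f + c f) * f i)"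
    unfolding vadd_def a c by (simp add: sum.distrib algebra_simps)
  then show ?thesis by (rule Ncomb_I)
qed

lemma Ncomb_smul: "u \<in> Ncomb F \<Longrightarrow> vsmul k u \<in> Ncomb F"
proof -
  assume "u \<in> Ncomb F"
  then obtain a where a: "u = (\<lambda>i. \<Sum>f\<in>F. a f * f i)"
    unfolding Ncomb_def by blast
  have "vsmul k u = (\<lambda>i. \<Sum>f\<in>F. (k * a f) * f i)"
    unfolding vsmul_def a by (simp add: sum_distrib_left algebra_simps)
  then show ?thesis by (rule Ncomb_I)
qed

lemma linset_add: "x \<in> linset b F \<Longrightarrow> p \<in> Ncomb F \<Longrightarrow> vadd x p \<in> linset b F"
proof -
  assume "x \<in> linset b F" "p \<in> Ncomb F"
  then obtain v where v: "v \<in> Ncomb F" "x = vadd b v" unfolding linset_def by blast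
  have "vadd x p = vadd b (vadd v p)" using v(2) by (simp add: vadd_def add.assoc)
  moreover have "vadd v p \<in> Ncomb F" using v(1) \<open>p \<in> Ncomb F\<close> by (rule Ncomb_add)
  ultimately show ?thesis unfolding linset_def by blast
qed

lemma ge1_intr:
  assumes "finite F" "w \<in> Ncomb_ge1 F"
  shows "w \<in> intr (Ncomb F)"
proof -
  obtain l where l: "\<forall>f\<in>F. l f \<ge> 1" "w = (\<lambda>i. \<Sum>f\<in>F. l f * f i)"
    using assms(2) unfolding Ncomb_ge1_def by blast
  have wP: "w \<in> Ncomb F" using l(2) unfolding Ncomb_def by blast
  have "\<exists>m. \<exists>p\<in>Ncomb F. vsmul m w = vadd x p" if xP: "x \<in> Ncomb F" for x
  proof -
    obtain mu where mu: "x = (\<lambda>i. \<Sum>f\<in>F. mu f * f i)" using xP by (rule Ncomb_E)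
    define m where "m = (\<Sum>f\<in>F. mu f)"
    have le: "mu f \<le> m * l f" if "f \<in> F" for f
    proof -
      have "mu f \<le> m" unfolding m_def using member_le_sum[of f F mu] assms(1) that by simp
      also have "\<dots> \<le> m * l f" using l(1) that by simp
      finally show ?thesis .
    qed
    define p where "p = (\<lambda>i. \<Sum>f\<in>F. (m * l f - mu f) * f i)"
    have pP: "p \<in> Ncomb F" unfolding p_def by (rule Ncomb_I[where lam="\<lambda>f. m * l f - mu f"]) simp
    have "vsmul m w = vadd x p"
      unfolding vsmul_def vadd_def l(2) mu p_def
    proof
      fix i
      have "m * (\<Sum>f\<in>F. l f * f i) = (\<Sum>f\<in>F. (mu f + (m * l f - mu f)) * f i)"
        by (simp add: sum_distrib_left mult.assoc le cong: sum.cong)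
      also have "\<dots> = (\<Sum>f\<in>F. mu f * f i) + (\<Sum>f\<in>F. (m * l f - mu f) * f i)"
        by (simp add: sum.distrib algebra_simps)
      finally show "m * (\<Sum>f\<in>F. l f * f i) = (\<Sum>f\<in>F. mu f * f i) + (\<Sum>f\<in>F. (m * l f - mu f) * f i)" .
    qed
    then show ?thesis using pP by blast
  qed
  then show ?thesis using wP unfolding intr_def by blast
qed

lemma intr_mult_ge1:
  assumes "w \<in> intr (Ncomb F)"
  shows "\<exists>m\<ge>1. vsmul m w \<in> Ncomb_ge1 F"
proof -
  have wP: "w \<in> Ncomb F" and I: "\<forall>x\<in>Ncomb F. \<exists>m. \<exists>p\<in>Ncomb F. vsmul m w = vadd x p"
    using assms unfolding intr_def by auto
  define u where "u = (\<lambda>i. \<Sum>f\<in>F. 1 * f i)"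
  have "u \<in> Ncomb F" unfolding u_def by (rule Ncomb_I[where lam="\<lambda>_. 1"]) simp
  then obtain m p where p: "p \<in> Ncomb F" "vsmul m w = vadd u p" using I by blast
  have "vadd p w \<in> Ncomb F" using p(1) wP by (rule Ncomb_add)
  then obtain c where c: "vadd p w = (\<lambda>i. \<Sum>f\<in>F. c f * f i)" unfolding Ncomb_def by blast
  have "vsmul (m+1) w = vadd u (vadd p w)"
    using p(2) by (auto simp: vsmul_def vadd_def fun_eq_iff algebra_simps dest: fun_cong)
  also have "\<dots> = (\<lambda>i. \<Sum>f\<in>F. (1 + c f) * f i)" (is "_ = ?r")
  proof
    fix i
    have ci: "vadd p w i = (\<Sum>f\<in>F. c f * f i)" using c by simp
    show "vadd u (vadd p w) i = (\<Sum>f\<in>F. (1 + c f) * f i)"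
      using ci unfolding u_def vadd_def by (simp add: sum.distrib algebra_simps)
  qed
  finally have "vsmul (m+1) w \<in> Ncomb_ge1 F" unfolding Ncomb_ge1_def by force
  then show ?thesis by (intro exI[of _ "m+1"]) simp
qed

lemma part1:
  assumes "finite F"
  shows "trileq X b F \<longleftrightarrow>
           (\<forall>x\<in>linset b F. \<forall>w\<in>intr (Ncomb F).
              \<exists>N::nat. \<forall>k\<ge>N. vadd x (vsmul k w) \<in> X)"
proof
  assume R: "\<forall>x\<in>linset b F. \<forall>w\<in>intr (Ncomb F). \<exists>N::nat. \<forall>k\<ge>N. vadd x (vsmul k w) \<in> X"
  show "trileq X b F" unfolding trileq_def using R ge1_intr[OF assms] by blast
next
  assume A: "trileq X b F"
  show "\<forall>x\<in>linset b F. \<forall>w\<in>intr (Ncomb F). \<exists>N::nat. \<forall>k\<ge>N. vadd x (vsmul k w) \<in> X"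
  proof (intro ballI)
    fix x w assume x: "x \<in> linset b F" and w: "w \<in> intr (Ncomb F)"
    have wP: "w \<in> Ncomb F" using w unfolding intr_def by auto
    obtain m where m: "m \<ge> 1" "vsmul m w \<in> Ncomb_ge1 F" using intr_mult_ge1[OF w] by blast
    have "\<forall>r. \<exists>N. \<forall>k\<ge>N. vadd (vadd x (vsmul r w)) (vsmul k (vsmul m w)) \<in> X"
    proof
      fix r
      have "vadd x (vsmul r w) \<in> linset b F" using x Ncomb_smul[OF wP] by (rule linset_add)
      then show "\<exists>N. \<forall>k\<ge>N. vadd (vadd x (vsmul r w)) (vsmul k (vsmul m w)) \<in> X"
        using A m(2) unfolding trileq_def by blast
    qed
    then obtain N where N: "\<And>r k. k \<ge> N r \<Longrightarrow> vadd (vadd x (vsmul r w)) (vsmul k (vsmul m w)) \<in> X"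
      by metis
    define M where "M = Max (N ` {..<m})"
    have "vadd x (vsmul k w) \<in> X" if "k \<ge> m * M" for k
    proof -
      define r where "r = k mod m"
      define q where "q = k div m"
      have rm: "r < m" using m(1) unfolding r_def by simp
      have "M \<le> q" unfolding q_def using that m(1)
        by (metis div_le_mono div_mult_self1_is_m le_numeral_extra(2) less_le_trans mult.commute zero_less_iff_neq_zero)
      moreover have "N r \<le> M" unfolding M_def using rm by (intro Max_ge) auto
      ultimately have "vadd (vadd x (vsmul r w)) (vsmul q (vsmul m w)) \<in> X" by (intro N) simp
      moreover have "k = r + q * m" unfolding r_def q_def by simp
      ultimately show ?thesis by (simp add: vadd_def vsmul_def algebra_simps)
    qed
    then show "\<exists>N::nat. \<forall>k\<ge>N. vadd x (vsmul k w) \<in> X" by blast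
  qed
qed

lemma linset_min: "y \<in> linset b F \<Longrightarrow> b i \<le> y i"
  unfolding linset_def vadd_def by auto

lemma linset_base: "b \<in> linset b F"
proof -
  have "b = vadd b (\<lambda>i. 0)" by (simp add: vadd_def)
  then show ?thesis unfolding linset_def using Ncomb_zero by blast
qed

lemma linset_eq_Ncomb:
  assumes "linset b' F' = linset b F"
  shows "b' = b \<and> Ncomb F' = Ncomb F"
proof -
  have "b' = b"
  proof
    fix i
    show "b' i = b i" using linset_min[where b=b and F=F and i=i] linset_min[where b=b' and F=F' and i=i] linset_base[of b F]
        linset_base[of b' F'] assms by (metis le_antisym)
  qed
  moreover have "Ncomb F' = Ncomb F"
  proof -
    have inj: "vadd b u = vadd b v \<Longrightarrow> u = v" for u v
      by (auto simp: vadd_def fun_eq_iff dest: fun_cong)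
    have "v \<in> Ncomb G'" if "v \<in> Ncomb G" "linset b G = linset b G'" for v G G'
    proof -
      have "vadd b v \<in> linset b G'" using that unfolding linset_def by blast
      then obtain v' where "v' \<in> Ncomb G'" "vadd b v = vadd b v'" unfolding linset_def by blast
      then show ?thesis using inj by blast
    qed
    then show ?thesis using assms \<open>b' = b\<close> by blast
  qed
  ultimately show ?thesis by blast
qed

theorem mainTheorem11:
  fixes b :: "'n::finite \<Rightarrow> nat" and F :: "('n \<Rightarrow> nat) set" and X :: "('n \<Rightarrow> nat) set"
  assumes "finite F" and "X \<subseteq> linset b F"
  shows "(trileq X b F \<longleftrightarrow>
           (\<forall>x\<in>linset b F. \<forall>w\<in>intr (Ncomb F).
              \<exists>N::nat. \<forall>k\<ge>N. vadd x (vsmul k w) \<in> X))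
       \<and> (\<forall>b' F'. finite F' \<and> linset b' F' = linset b F \<longrightarrow> (trileq X b' F' \<longleftrightarrow> trileq X b F))"
proof (intro conjI allI impI)
  show "trileq X b F \<longleftrightarrow> (\<forall>x\<in>linset b F. \<forall>w\<in>intr (Ncomb F).
              \<exists>N::nat. \<forall>k\<ge>N. vadd x (vsmul k w) \<in> X)" by (rule part1[OF assms(1)])
next
  fix b' F' assume h: "finite F' \<and> linset b' F' = linset b F"
  then have e: "linset b' F' = linset b F" "Ncomb F' = Ncomb F" using linset_eq_Ncomb by blast+
  show "trileq X b' F' \<longleftrightarrow> trileq X b F"
    using part1[OF assms(1), of X b] part1[where F=F' and X=X and b=b'] h e by simp
qed

end
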